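(* Let $\alpha\in(0,\pi/2]$ and consider the system of two nonlinear equations in the unknowns $d$ and $u_1$ \begin{align*} &3(1+\cos\alpha) d^2 + 8\cos\left(\frac{\alpha}{2}\right)d u_1 + 6u_1^2 - 10(1+\alpha\csc\alpha)=0,\\ &4 d^6 - 24 d^4 + 57 d^2 - 12\sec\left(\frac{\alpha}{2}\right) d (d^2-3) u_1 + 9\sec^2\left(\frac{\alpha}{2}\right)u_1^2 + 105\csc^2\left(\frac{\alpha}{2}\right)\left(1-\alpha\csc\alpha\right)=0. \end{align*} Let $p(x)=p_1(\sqrt{x})$, where \begin{align*} p_1(d)&=-32 \sin^6\alpha\, d^{12} +256 \sin^6\alpha\,d^{10} -1184 \sin^6\alpha\,d^{8}\\ &-96 \sin^3\alpha\,(-40 \alpha +9 \sin\alpha +20 \sin2\alpha+7\sin3\alpha -30 \alpha \cos\alpha)\,d^{6}\\ &+96 \sin^3\alpha\,(-160\alpha +99 \sin\alpha +80 \sin2\alpha+7 \sin3\alpha -120\alpha \cos\alpha)\,d^{4}\\ &+13440 (\alpha -\sin\alpha)\sin^5\alpha\, \csc^2\left(\frac{\alpha }{2}\right)\,d^{2} -1800 \left(6\alpha +8\alpha\cos\alpha -2\sin\alpha(3\cos\alpha+4)\right)^2 . \end{align*} Then the number of real solutions $(d,u_1)$ of this system with $d>0$ is the same as the number of positive zeros of $p$.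
   Context: Interpolation of $G^2$ data (two points, tangent directions, curvatures) and arc length by Pythagorean-hodograph curves of degree 7, with hodograph $\mathbf{w}^2$ where $\mathbf{w}$ is a complex cubic with Bernstein coefficients $\mathbf{w}_0,\dots,\mathbf{w}_3$, $\mathbf{w}_0 = d\,e^{i\theta_0/2}$, $\mathbf{w}_3=d\,e^{i\theta_1/2}$, $\mathbf{w}_1=u_1+iv_1$, $\mathbf{w}_2=u_2+iv_2$. Data are taken from a circular arc of inner angle $2\alpha$ in canonical position ($\theta_0=-\theta_1=\alpha$, $\kappa_0=\kappa_1=-2\sin\alpha$, $L=\alpha\csc\alpha$), and the symmetric case $u_1=u_2$ (hence $v_2=-v_1$) is considered, which reduces the problem to the system above. Here $\csc=1/\sin$, $\sec=1/\cos$. *)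

theory Defs
  imports Complex_Main "HOL-Library.Equipollence"
begin

definition csc :: "real \<Rightarrow> real" where "csc x = 1 / sin x"
definition sec :: "real \<Rightarrow> real" where "sec x = 1 / cos x"

definition eq1 :: "real \<Rightarrow> real \<Rightarrow> real \<Rightarrow> bool" where
  "eq1 \<alpha> d u1 \<longleftrightarrow>
     3 * (1 + cos \<alpha>) * d^2 + 8 * cos (\<alpha>/2) * d * u1 + 6 * u1^2
       - 10 * (1 + \<alpha> * csc \<alpha>) = 0"

definition eq2 :: "real \<Rightarrow> real \<Rightarrow> real \<Rightarrow> bool" where
  "eq2 \<alpha> d u1 \<longleftrightarrow>
     4 * d^6 - 24 * d^4 + 57 * d^2 - 12 * sec (\<alpha>/2) * d * (d^2 - 3) * u1
       + 9 * (sec (\<alpha>/2))^2 * u1^2 + 105 * (csc (\<alpha>/2))^2 * (1 - \<alpha> * csc \<alpha>) = 0"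

definition p1 :: "real \<Rightarrow> real \<Rightarrow> real" where
  "p1 \<alpha> d =
     - 32 * (sin \<alpha>)^6 * d^12 + 256 * (sin \<alpha>)^6 * d^10 - 1184 * (sin \<alpha>)^6 * d^8
     - 96 * (sin \<alpha>)^3 * (-40 * \<alpha> + 9 * sin \<alpha> + 20 * sin (2*\<alpha>) + 7 * sin (3*\<alpha>)
                             - 30 * \<alpha> * cos \<alpha>) * d^6
     + 96 * (sin \<alpha>)^3 * (-160 * \<alpha> + 99 * sin \<alpha> + 80 * sin (2*\<alpha>) + 7 * sin (3*\<alpha>)
                             - 120 * \<alpha> * cos \<alpha>) * d^4
     + 13440 * (\<alpha> - sin \<alpha>) * (sin \<alpha>)^5 * (csc (\<alpha>/2))^2 * d^2
     - 1800 * (6 * \<alpha> + 8 * \<alpha> * cos \<alpha> - 2 * sin \<alpha> * (3 * cos \<alpha> + 4))^2"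

definition p :: "real \<Rightarrow> real \<Rightarrow> real" where
  "p \<alpha> x = p1 \<alpha> (sqrt x)"

end

theory Submission
  imports Defs
begin

lemma sin_bnd: fixes x :: real shows "\<bar>sin x - (x - x^3/6 + x^5/120 - x^7/5040)\<bar> \<le> x^8/40320"
proof -
  have e: "{..<8::nat} = {0,1,2,3,4,5,6,7}" by auto
  have "(\<Sum>m<8. sin_coeff m * x ^ m) = x - x^3/6 + x^5/120 - x^7/5040"
    unfolding e by (simp add: sin_coeff_def fact_numeral)
  then show ?thesis using Maclaurin_sin_bound[of x 8] by (simp add: fact_numeral power_abs)
qed

fun hev :: "real list \<Rightarrow> real \<Rightarrow> real" where
  "hev [] x = 0"
| "hev (c # cs) x = c + x * hev cs x"

lemma hev_mono:
  assumes "list_all (\<lambda>c. 0 \<le> c) cs" "0 \<le> x" "x \<le> y"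
  shows "0 \<le> hev cs x \<and> hev cs x \<le> hev cs y"
  using assms
proof (induction cs)
  case Nil then show ?case by simp
next
  case (Cons c cs)
  then have ih: "0 \<le> hev cs x" "hev cs x \<le> hev cs y" by auto
  have "x * hev cs x \<le> y * hev cs y"
    using ih Cons.prems by (meson mult_mono order_trans)
  then show ?case using Cons.prems ih by simp
qed

lemma hev_pos:
  assumes "list_all (\<lambda>c. 0 \<le> c) P" "list_all (\<lambda>c. 0 \<le> c) N"
    "0 \<le> lo" "lo \<le> x" "x \<le> hi" "hev N hi < hev P lo"
  shows "0 < hev P x - hev N x"
proof -
  have "hev P lo \<le> hev P x" using hev_mono[OF assms(1) assms(3,4)] by simp
  moreover have "hev N x \<le> hev N hi" using hev_mono[OF assms(2), of x hi] assms by simp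
  ultimately show ?thesis using assms(6) by simp
qed

definition HP :: "real list" where "HP = [4, 0, 0, 0, 0, 0, 1895/12096, 0, 0, 6217/20643840, 41207/44236800, 0, 0, 343387/92484403200, 125348149/133177540608000, 0, 0, 130877/33294385152000, 0, 0, 262069/44747653644288000, 0]"
definition HN :: "real list" where "HN = [0, 0, 0, 0, 11/15, 1/192, 0, 23/286720, 399181/25804800, 0, 0, 245479/4954521600, 711713/19267584000, 0, 0, 1336663/8323596288000, 2879819/266355081216000, 0, 8116159/67121480466432000, 4679/99883155456000, 0, 262099/1073943687462912000]"
definition H2P :: "real list" where "H2P = [60, 0, 30, 0, 0, 0, 1/28, 0]"
definition H2N :: "real list" where "H2N = [0, 0, 0, 0, 3/2, 0, 0, 1/224]"

lemma h_pos:
  assumes "0 \<le> x" "x \<le> 1571/1000"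
  shows "0 < hev HP x - hev HN x"
proof -
  have P: "list_all (\<lambda>c. 0 \<le> c) HP" "list_all (\<lambda>c. 0 \<le> c) HN"
    by (simp_all add: HP_def HN_def)
  consider "x \<le> 3/4" | "3/4 \<le> x" "x \<le> 11/10" | "11/10 \<le> x" "x \<le> 27/20"
    | "27/20 \<le> x" "x \<le> 29/20" | "29/20 \<le> x" "x \<le> 3/2" | "3/2 \<le> x" by linarith
  then show ?thesis
  proof cases
    case 1 then show ?thesis using assms by (intro hev_pos[OF P, of 0 x "3/4"]) (simp_all add: HP_def HN_def)
  next
    case 2 then show ?thesis using assms by (intro hev_pos[OF P, of "3/4" x "11/10"]) (simp_all add: HP_def HN_def)
  next
    case 3 then show ?thesis using assms by (intro hev_pos[OF P, of "11/10" x "27/20"]) (simp_all add: HP_def HN_def)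
  next
    case 4 then show ?thesis using assms by (intro hev_pos[OF P, of "27/20" x "29/20"]) (simp_all add: HP_def HN_def)
  next
    case 5 then show ?thesis using assms by (intro hev_pos[OF P, of "29/20" x "3/2"]) (simp_all add: HP_def HN_def)
  next
    case 6 then show ?thesis using assms by (intro hev_pos[OF P, of "3/2" x "1571/1000"]) (simp_all add: HP_def HN_def)
  qed
qed

lemma h2_pos:
  assumes "0 \<le> x" "x \<le> 1571/1000"
  shows "0 < hev H2P x - hev H2N x"
  using assms by (intro hev_pos[of _ _ 0 x "1571/1000"]) (simp_all add: H2P_def H2N_def)


lemma f_pos:
  fixes a :: real
  assumes a0: "0 < a" and ab: "a \<le> 1571/1000"
  shows "0 < a*(210 - 240*(sin(a/2))^2) - sin a*(210 - 180*(sin(a/2))^2 + 16*(sin a)^2)"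
proof -
  define s where "s = sin(a/2)"
  define S where "S = sin a"
  define su where "su = a/2 - (a/2)^3/6 + (a/2)^5/120 - (a/2)^7/5040 + (a/2)^8/40320"
  define Su where "Su = a - a^3/6 + a^5/120 - a^7/5040 + a^8/40320"
  have api: "a \<le> pi" using ab pi_ge_two by linarith
  have s0: "0 \<le> s" unfolding s_def using a0 api by (intro sin_ge_zero) auto
  have s1: "s \<le> 1" unfolding s_def by simp
  have ssu: "s \<le> su" using abs_le_D1[OF sin_bnd[of "a/2"]] unfolding s_def su_def by linarith
  have S0: "0 \<le> S" unfolding S_def using a0 api by (intro sin_ge_zero) auto
  have SSu: "S \<le> Su" using abs_le_D1[OF sin_bnd[of "a"]] unfolding S_def Su_def by linarith
  have "240*a - 180*Su = a*(hev H2P a - hev H2N a)"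
    unfolding H2P_def H2N_def Su_def by simp algebra
  moreover have "0 < a*(hev H2P a - hev H2N a)" using h2_pos[of a] a0 ab by simp
  ultimately have c1: "180*Su - 240*a \<le> 0" by linarith
  have ss1: "s^2 \<le> 1" using s0 s1 by (simp add: power_le_one)
  have st1: "S*(210 - 180*s^2) \<le> Su*(210-180*s^2)" using SSu ss1 by (intro mult_right_mono) auto
  have st2: "S^3 \<le> Su^3" using S0 SSu by (intro power_mono) auto
  have st3: "su^2*(180*Su - 240*a) \<le> s^2*(180*Su - 240*a)"
    using c1 power_mono[OF ssu s0, of 2] by (intro mult_right_mono_neg) auto
  have id: "a*(210 - 240*su^2) - Su*(210 - 180*su^2 + 16*Su^2) = a^3 * (hev HP a - hev HN a)"
    unfolding HP_def HN_def Su_def su_def by (simp add: eval_nat_numeral field_simps)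
  have "0 < a^3 * (hev HP a - hev HN a)" using h_pos[of a] a0 ab by simp
  then have "0 < a*(210 - 240*su^2) - Su*(210 - 180*su^2 + 16*Su^2)" using id by simp
  then have "0 < a*(210 - 240*s^2) - S*(210 - 180*s^2 + 16*S^2)"
    using st1 st2 st3 by (simp add: algebra_simps power2_eq_square power3_eq_cube)
  then show ?thesis unfolding s_def S_def .
qed


lemma pi_le: "pi/2 \<le> 1571/1000"
proof (rule ccontr)
  define b :: real where "b = 1571/1000"
  assume "\<not> pi/2 \<le> 1571/1000"
  then have "b < pi/2" unfolding b_def by simp
  then have cpos: "0 < cos b" by (intro cos_gt_zero_pi) (auto simp: b_def)
  define L :: real where "L = b/2 - (b/2)^3/6 + (b/2)^5/120 - (b/2)^7/5040 - (b/2)^8/40320"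
  have "L \<le> sin (b/2)" using abs_le_D2[OF sin_bnd[of "b/2"]] unfolding L_def by linarith
  moreover have L0: "0 \<le> L" unfolding L_def b_def by (simp add: power_divide)
  ultimately have "L^2 \<le> (sin (b/2))^2" by (intro power_mono) auto
  moreover have "1/2 < L^2" unfolding L_def b_def by (simp add: power_divide)
  moreover have "cos b = 1 - 2 * (sin (b/2))^2" using cos_double_sin[of "b/2"] by simp
  ultimately show False using cpos by linarith
qed

lemma alg_i:
  fixes s c A d u :: real
  assumes "s \<noteq> 0" "c \<noteq> 0"
  shows "4*d^6 - 24*d^4 + 57*d^2 - 12*(1/c)*d*(d^2-3)*u + 9*(1/c)^2*u^2 + 105*(1/s)^2*(1-A)
    = 3/(2*c^2) * (6*c^2*d^2 + 8*c*d*u + 6*u^2 - 10*(1+A))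
      + (4*d^6-24*d^4+48*d^2 + (15*(1+A)/c^2 + 105*(1-A)/s^2)) - 12*d*(d^2-2)*(u/c)"
  using assms by (simp add: field_simps eval_nat_numeral)

lemma alg_ii:
  fixes s c A d :: real
  assumes "s \<noteq> 0" "c \<noteq> 0" "s^2 + c^2 = 1"
  shows "-32*(4*s^2*c^2)^3*d^12 + 256*(4*s^2*c^2)^3*d^10 - 1184*(4*s^2*c^2)^3*d^8
     - 96*(4*s^2*c^2)^2*(-40*A + 30 + 40*(c^2-s^2) - 28*(4*s^2*c^2) - 30*A*(c^2-s^2))*d^6
     + 96*(4*s^2*c^2)^2*(-160*A + 120 + 160*(c^2-s^2) - 28*(4*s^2*c^2) - 120*A*(c^2-s^2))*d^4
     + 13440*(A-1)*(4*s^2*c^2)^3/s^2*d^2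
     - 1800*(4*s^2*c^2)*(6*A+8*A*(c^2-s^2)-6*(c^2-s^2)-8)^2
   = -((4*s^2*c^2)^3/(3*c^2)) * (c^2*(6*d^2*(12*d*(d^2-2))^2
        + 8*d*(4*d^6-24*d^4+48*d^2+(15*(1+A)/c^2 + 105*(1-A)/s^2))*(12*d*(d^2-2))
        + 6*(4*d^6-24*d^4+48*d^2+(15*(1+A)/c^2 + 105*(1-A)/s^2))^2)-10*(1+A)*(12*d*(d^2-2))^2)"
  using assms apply (simp add: field_simps eval_nat_numeral) by algebra

lemma p1_subst:
  fixes s c A d a :: real
  assumes "s \<noteq> 0" "c \<noteq> 0" "a = A*(2*s*c)"
  shows "- 32 * (2*s*c)^6 * d^12 + 256 * (2*s*c)^6 * d^10 - 1184 * (2*s*c)^6 * d^8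
     - 96 * (2*s*c)^3 * (-40 * a + 9 * (2*s*c) + 20 * (2*(2*s*c)*(c^2-s^2)) + 7 * (3*(2*s*c) - 4*(2*s*c)^3)
                             - 30 * a * (c^2-s^2)) * d^6
     + 96 * (2*s*c)^3 * (-160 * a + 99 * (2*s*c) + 80 * (2*(2*s*c)*(c^2-s^2)) + 7 * (3*(2*s*c) - 4*(2*s*c)^3)
                             - 120 * a * (c^2-s^2)) * d^4
     + 13440 * (a - (2*s*c)) * (2*s*c)^5 * (1/s)^2 * d^2
     - 1800 * (6 * a + 8 * a * (c^2-s^2) - 2 * (2*s*c) * (3 * (c^2-s^2) + 4))^2
   = -32*(4*s^2*c^2)^3*d^12 + 256*(4*s^2*c^2)^3*d^10 - 1184*(4*s^2*c^2)^3*d^8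
     - 96*(4*s^2*c^2)^2*(-40*A + 30 + 40*(c^2-s^2) - 28*(4*s^2*c^2) - 30*A*(c^2-s^2))*d^6
     + 96*(4*s^2*c^2)^2*(-160*A + 120 + 160*(c^2-s^2) - 28*(4*s^2*c^2) - 120*A*(c^2-s^2))*d^4
     + 13440*(A-1)*(4*s^2*c^2)^3/s^2*d^2
     - 1800*(4*s^2*c^2)*(6*A+8*A*(c^2-s^2)-6*(c^2-s^2)-8)^2"
  unfolding assms(3) using assms(1,2) by (simp add: field_simps eval_nat_numeral)


definition KK :: "real \<Rightarrow> real \<Rightarrow> real \<Rightarrow> real" where
  "KK s c A = 15*(1+A)/c^2 + 105*(1-A)/s^2"
definition NN :: "real \<Rightarrow> real \<Rightarrow> real \<Rightarrow> real \<Rightarrow> real" where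
  "NN s c A d = 4*d^6-24*d^4+48*d^2 + KK s c A"
definition DD :: "real \<Rightarrow> real" where
  "DD d = 12*d*(d^2-2)"
definition QQ :: "real \<Rightarrow> real \<Rightarrow> real \<Rightarrow> real \<Rightarrow> real" where
  "QQ s c A d = c^2*(6*d^2*(DD d)^2 + 8*d*NN s c A d*DD d + 6*(NN s c A d)^2) - 10*(1+A)*(DD d)^2"

lemma char:
  fixes a :: real
  assumes a0: "0 < a" and api: "a \<le> pi/2" and d0: "0 < d"
  defines "s \<equiv> sin (a/2)" and "c \<equiv> cos (a/2)" and "A \<equiv> a / sin a"
  shows "(eq1 a d u \<and> eq2 a d u) \<longleftrightarrow> (p1 a d = 0 \<and> u = c * NN s c A d / DD d)"
proof -
  define S where "S = sin a"
  have pi4: "a/2 < pi" "a/2 < pi/2" using api pi_gt_zero by linarith+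
  have s0: "0 < s" unfolding s_def using a0 pi4 by (intro sin_gt_zero) auto
  have c0: "0 < c" unfolding c_def using a0 pi4 by (intro cos_gt_zero_pi) auto
  have Ssc: "S = 2*s*c" unfolding S_def s_def c_def using sin_double[of "a/2"] by simp
  have Cc: "cos a = c^2 - s^2" unfolding s_def c_def using cos_double[of "a/2"] by simp
  have sc1: "s^2 + c^2 = 1" unfolding s_def c_def by simp
  have S0: "0 < S" using Ssc s0 c0 by simp
  have aA: "a = A * (2*s*c)"
  proof -
    have "A * S = a" using S0 unfolding A_def S_def by simp
    then show ?thesis using Ssc by simp
  qed
  have sin2: "sin (2*a) = 2*(2*s*c)*(c^2-s^2)" using sin_double[of a] Ssc Cc S_def by simp
  have cos2: "cos (2*a) = 1 - 2*(2*s*c)^2" using cos_double_sin[of a] Ssc S_def by simp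
  have sin3: "sin (3*a) = 3*(2*s*c) - 4*(2*s*c)^3"
  proof -
    have "sin (3*a) = sin (2*a + a)" by simp
    also have "\<dots> = sin (2*a) * cos a + cos (2*a) * sin a" by (rule sin_add)
    also have "\<dots> = 2*S*(cos a)^2 + (1 - 2*S^2)*S" using sin_double[of a] cos_double_sin[of a] S_def
      by (simp add: power2_eq_square)
    also have "(cos a)^2 = 1 - S^2" unfolding S_def by (simp add: cos_squared_eq)
    finally show ?thesis unfolding Ssc by (simp add: algebra_simps power_mult_distrib power2_eq_square power3_eq_cube)
  qed
  have cscA: "a * csc a = A" unfolding csc_def A_def by simp
  have csch: "csc (a/2) = 1/s" unfolding csc_def s_def ..
  have sech: "sec (a/2) = 1/c" unfolding sec_def c_def ..
  have sinS: "sin a = 2*s*c" using Ssc S_def by simp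
  have p1Q: "p1 a d = -((4*s^2*c^2)^3/(3*c^2)) * QQ s c A d"
  proof -
    have "p1 a d = - 32 * (2*s*c)^6 * d^12 + 256 * (2*s*c)^6 * d^10 - 1184 * (2*s*c)^6 * d^8
     - 96 * (2*s*c)^3 * (-40 * a + 9 * (2*s*c) + 20 * (2*(2*s*c)*(c^2-s^2)) + 7 * (3*(2*s*c) - 4*(2*s*c)^3)
                             - 30 * a * (c^2-s^2)) * d^6
     + 96 * (2*s*c)^3 * (-160 * a + 99 * (2*s*c) + 80 * (2*(2*s*c)*(c^2-s^2)) + 7 * (3*(2*s*c) - 4*(2*s*c)^3)
                             - 120 * a * (c^2-s^2)) * d^4
     + 13440 * (a - (2*s*c)) * (2*s*c)^5 * (1/s)^2 * d^2
     - 1800 * (6 * a + 8 * a * (c^2-s^2) - 2 * (2*s*c) * (3 * (c^2-s^2) + 4))^2"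
      unfolding p1_def sin2 sin3 Cc csch sinS ..
    also have sn: "s \<noteq> 0" and cn: "c \<noteq> 0" using s0 c0 by auto
    note p1_subst[OF sn cn aA]
    also note alg_ii[OF sn cn sc1]
    finally show ?thesis unfolding QQ_def NN_def DD_def KK_def .
  qed
  have Kneg: "KK s c A + 32 < 0"
  proof -
    have ab: "a \<le> 1571/1000" using api pi_le by linarith
    have f: "0 < a*(210 - 240*s^2) - S*(210 - 180*s^2 + 16*S^2)"
      using f_pos[OF a0 ab] unfolding s_def S_def .
    have e: "(15*(1+A)*s^2 + 105*(1-A)*c^2 + 32*s^2*c^2) * S
        = -(1/2)*(a*(210 - 240*s^2) - S*(210 - 180*s^2 + 16*S^2))"
      unfolding aA Ssc using sc1 by algebra
    have "(15*(1+A)*s^2 + 105*(1-A)*c^2 + 32*s^2*c^2) * S < 0" unfolding e using f by simp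
    then have n: "15*(1+A)*s^2 + 105*(1-A)*c^2 + 32*s^2*c^2 < 0" using S0
      by (simp add: mult_less_0_iff)
    have "KK s c A + 32 = (15*(1+A)*s^2 + 105*(1-A)*c^2 + 32*s^2*c^2) / (s^2*c^2)"
      unfolding KK_def using s0 c0 by (simp add: field_simps)
    also have "\<dots> < 0" using n s0 c0 by (simp add: divide_neg_pos)
    finally show ?thesis .
  qed
  have D0N: "DD d = 0 \<Longrightarrow> NN s c A d \<noteq> 0"
  proof -
    assume "DD d = 0"
    then have "d^2 = 2" using d0 unfolding DD_def by simp
    have "d^6 = (d^2)^3" "d^4 = (d^2)^2" by (simp_all add: power_mult[symmetric])
    then have "d^6 = 8" "d^4 = 4" using \<open>d^2 = 2\<close> by simp_all
    then have "NN s c A d = 32 + KK s c A" unfolding NN_def using \<open>d^2 = 2\<close> by simp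
    then show ?thesis using Kneg by simp
  qed
  have E1: "eq1 a d u \<longleftrightarrow> 6*c^2*d^2 + 8*c*d*u + 6*u^2 - 10*(1+A) = 0"
  proof -
    have "3 * (1 + cos a) = 6*c^2" using Cc sc1 by simp
    then show ?thesis unfolding eq1_def cscA c_def[symmetric]
      by (simp add: algebra_simps)
  qed
  have E2: "eq2 a d u \<longleftrightarrow> 4*d^6 - 24*d^4 + 57*d^2 - 12*(1/c)*d*(d^2-3)*u + 9*(1/c)^2*u^2 + 105*(1/s)^2*(1-A) = 0"
    unfolding eq2_def sech csch cscA by (simp add: algebra_simps)
  have I: "4*d^6 - 24*d^4 + 57*d^2 - 12*(1/c)*d*(d^2-3)*u + 9*(1/c)^2*u^2 + 105*(1/s)^2*(1-A)
    = 3/(2*c^2) * (6*c^2*d^2 + 8*c*d*u + 6*u^2 - 10*(1+A)) + NN s c A d - DD d*(u/c)"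
    using alg_i[of s c d u A] s0 c0 unfolding NN_def KK_def DD_def by simp
  have coef: "-((4*s^2*c^2)^3/(3*c^2)) \<noteq> 0" using s0 c0 by simp
  have QE: "DD d \<noteq> 0 \<Longrightarrow> u = c * NN s c A d / DD d \<Longrightarrow>
      QQ s c A d = (DD d)^2 * (6*c^2*d^2 + 8*c*d*u + 6*u^2 - 10*(1+A))"
  proof -
    assume Dn: "DD d \<noteq> 0" and u: "u = c * NN s c A d / DD d"
    have "(DD d)^2 * (6*c^2*d^2 + 8*c*d*(c * NN s c A d / DD d) + 6*(c * NN s c A d / DD d)^2 - 10*(1+A))
       = QQ s c A d" unfolding QQ_def using Dn by (simp add: field_simps power2_eq_square)
    then show ?thesis using u by simp
  qed
  show ?thesis
  proof
    assume h: "eq1 a d u \<and> eq2 a d u"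
    then have e1: "6*c^2*d^2 + 8*c*d*u + 6*u^2 - 10*(1+A) = 0" using E1 by simp
    have e2: "4*d^6 - 24*d^4 + 57*d^2 - 12*(1/c)*d*(d^2-3)*u + 9*(1/c)^2*u^2 + 105*(1/s)^2*(1-A) = 0"
      using h E2 by blast
    have "3/(2*c^2) * (6*c^2*d^2 + 8*c*d*u + 6*u^2 - 10*(1+A)) + NN s c A d - DD d*(u/c) = 0"
      using e2 unfolding I .
    then have lin: "NN s c A d = DD d * (u/c)" unfolding e1 by simp
    have Dn: "DD d \<noteq> 0" using lin D0N by auto
    have u: "u = c * NN s c A d / DD d" using lin Dn c0 by (simp add: field_simps)
    have "QQ s c A d = 0" using QE[OF Dn u] e1 by simp
    then show "p1 a d = 0 \<and> u = c * NN s c A d / DD d" using p1Q u by simp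
  next
    assume h: "p1 a d = 0 \<and> u = c * NN s c A d / DD d"
    then have Q0: "QQ s c A d = 0" using p1Q coef by simp
    have Dn: "DD d \<noteq> 0"
    proof
      assume "DD d = 0"
      then have "QQ s c A d = 6*c^2*(NN s c A d)^2" unfolding QQ_def by simp
      moreover have "6*c^2*(NN s c A d)^2 \<noteq> 0" using D0N[OF \<open>DD d = 0\<close>] c0 by simp
      ultimately show False using Q0 by simp
    qed
    have e1: "6*c^2*d^2 + 8*c*d*u + 6*u^2 - 10*(1+A) = 0" using QE[OF Dn] h Q0 Dn by simp
    have "NN s c A d - DD d*(u/c) = 0" using h Dn c0 by simp
    then have "eq2 a d u" using E2 I e1 by simp
    then show "eq1 a d u \<and> eq2 a d u" using E1 e1 by simp
  qed
qed

theorem theorem1: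
  fixes \<alpha> :: real
  assumes "0 < \<alpha>" and "\<alpha> \<le> pi / 2"
  shows "{(d::real, u1::real). d > 0 \<and> eq1 \<alpha> d u1 \<and> eq2 \<alpha> d u1}
           \<approx> {x :: real. x > 0 \<and> p \<alpha> x = 0}"
proof -
  define s where "s = sin (\<alpha>/2)"
  define c where "c = cos (\<alpha>/2)"
  define A where "A = \<alpha> / sin \<alpha>"
  let ?X = "{(d::real, u1::real). d > 0 \<and> eq1 \<alpha> d u1 \<and> eq2 \<alpha> d u1}"
  let ?Y = "{x :: real. x > 0 \<and> p \<alpha> x = 0}"
  have ch: "\<And>d u. 0 < d \<Longrightarrow> (eq1 \<alpha> d u \<and> eq2 \<alpha> d u) \<longleftrightarrow> (p1 \<alpha> d = 0 \<and> u = c * NN s c A d / DD d)"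
    using char[OF assms] unfolding s_def c_def A_def by blast
  have "bij_betw (\<lambda>(d,u). d^2) ?X ?Y"
  proof (rule bij_betw_imageI)
    show "inj_on (\<lambda>(d,u). d^2) ?X"
    proof (rule inj_onI, clarify)
      fix d u d' u'
      assume h: "0 < d" "eq1 \<alpha> d u" "eq2 \<alpha> d u" "0 < d'" "eq1 \<alpha> d' u'" "eq2 \<alpha> d' u'" "d^2 = d'^2"
      have dd: "d = d'" using power2_eq_imp_eq[OF h(7)] h(1,4) by simp
      have "u = c * NN s c A d / DD d" using ch[OF h(1), of u] h by simp
      moreover have "u' = c * NN s c A d' / DD d'" using ch[OF h(4), of u'] h by simp
      ultimately show "d = d' \<and> u = u'" using dd by simp
    qed
    show "(\<lambda>(d,u). d^2) ` ?X = ?Y"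
    proof
      show "(\<lambda>(d,u). d^2) ` ?X \<subseteq> ?Y"
      proof clarify
        fix d u assume h: "0 < d" "eq1 \<alpha> d u" "eq2 \<alpha> d u"
        then have "p1 \<alpha> d = 0" using ch[OF h(1), of u] by simp
        then show "0 < d^2 \<and> p \<alpha> (d^2) = 0" using h(1) unfolding p_def by simp
      qed
    next
      show "?Y \<subseteq> (\<lambda>(d,u). d^2) ` ?X"
      proof
        fix x assume "x \<in> ?Y"
        then have x: "0 < x" "p1 \<alpha> (sqrt x) = 0" unfolding p_def by auto
        define d where "d = sqrt x"
        define u where "u = c * NN s c A d / DD d"
        have d0: "0 < d" unfolding d_def using x by simp
        have "(d, u) \<in> ?X" using ch[OF d0, of u] x d0 unfolding u_def d_def by simp
        moreover have "x = (\<lambda>(d,u). d^2) (d, u)" unfolding d_def using x by simp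
        ultimately show "x \<in> (\<lambda>(d,u). d^2) ` ?X" by blast
      qed
    qed
  qed
  then show ?thesis unfolding eqpoll_def by blast
qed

end
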